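(* Let $s>1$ be an integer, $z\in\mathbb{C}$ and $a$ a parameter for which the Lerch transcendent $\Phi(z,s,a)$ is defined. If the integral converges, then \[ \Phi(z,s,a)=\int_{[0,1]^{s+1}}\frac{-s\prod_{n=1}^{s+1}x_n^{a-1}}{\left(1-z\prod_{n=1}^{s+1}x_n\right)\log\left(\prod_{n=1}^{s+1}x_n\right)}\prod_{n=1}^{s+1}dx_n, \] and \[ \zeta(s)=\int_{[0,1]^{s+1}}\frac{-s}{\left(1-\prod_{k=1}^{s+1}x_k\right)\log\left(\prod_{k=1}^{s+1}x_k\right)}\prod_{k=1}^{s+1}dx_k. \]
   Context: The Lerch transcendent is $\Phi(z,s,a)=\sum_{k=0}^\infty \frac{z^k}{(k+a)^s}$ (where this series converges); $\zeta$ is the Riemann zeta function. *)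

theory Defs
  imports "HOL-Analysis.Analysis"
begin

definition lerch_phi :: "complex \<Rightarrow> nat \<Rightarrow> complex \<Rightarrow> complex" where
  "lerch_phi z s a = (\<Sum>k. z ^ k / (of_nat k + a) ^ s)"

definition zeta_int :: "nat \<Rightarrow> complex" where
  "zeta_int s = (\<Sum>k. 1 / (of_nat (Suc k)) ^ s)"

definition cube_measure :: "nat \<Rightarrow> (nat \<Rightarrow> real) measure" where
  "cube_measure s = PiM {1..s+1} (\<lambda>_. lborel)"

definition unit_cube :: "nat \<Rightarrow> (nat \<Rightarrow> real) set" where
  "unit_cube s = PiE {1..s+1} (\<lambda>_. {0..1})"

end

theory Submission
  imports Defs
begin


lemma Ln_of_real_neg:
  fixes t :: real assumes "t < 0"
  shows "Ln (complex_of_real t) = of_real (ln (-t)) + \<i> * pi"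
proof -
  have "complex_of_real t = exp (of_real (ln (-t)) + \<i> * pi)"
    using assms by (simp add: exp_add exp_of_real)
  then show ?thesis
    by (simp add: Ln_exp)
qed

lemma meas_Ln_real[measurable]: "(\<lambda>t::real. Ln (complex_of_real t)) \<in> borel_measurable borel"
proof -
  have "(\<lambda>t::real. Ln (complex_of_real t)) = (\<lambda>t. if 0 < t then of_real (ln t) else if t = 0 then Ln 0 else of_real (ln (-t)) + \<i> * pi)"
    by (auto simp: Ln_of_real Ln_of_real_neg fun_eq_iff)
  also have "\<dots> \<in> borel_measurable borel" by measurable
  finally show ?thesis .
qed

lemma meas_cpowr[measurable]:
  fixes f :: "'a \<Rightarrow> real" and c :: "'a \<Rightarrow> complex"
  assumes [measurable]: "f \<in> borel_measurable M" "c \<in> borel_measurable M"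
  shows "(\<lambda>x. complex_of_real (f x) powr c x) \<in> borel_measurable M"
proof -
  have [measurable]: "(\<lambda>x. Ln (complex_of_real (f x))) \<in> borel_measurable M"
    using measurable_comp[OF assms(1) meas_Ln_real] by (simp add: comp_def)
  show ?thesis unfolding powr_def by measurable
qed

interpretation PS: product_sigma_finite "\<lambda>_::nat. lborel :: real measure"
  by unfold_locales

lemma "(\<lambda>x. complex_of_real (\<Prod>n\<in>{1..s+1}. x n) powr (a - 1)) \<in> borel_measurable (cube_measure s)"
  unfolding cube_measure_def by measurable




lemma isCont_cpowr_real:
  fixes c :: complex assumes "Re c > 0" "t \<ge> 0"
  shows "isCont (\<lambda>t::real. complex_of_real t powr c) t"
  using assms by (intro continuous_powr_complex) (auto intro!: continuous_intros)

lemma real_1d_int: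
  fixes \<beta> :: real assumes "\<beta> > 0"
  shows "set_integrable lborel (einterval 0 1) (\<lambda>t. t powr (\<beta> - 1))"
proof (rule interval_integral_FTC_nonneg(1)[where F="\<lambda>t. t powr \<beta> / \<beta>" and A=0 and B="1/\<beta>"])
  show "\<And>x. 0 < ereal x \<Longrightarrow> ereal x < 1 \<Longrightarrow> ((\<lambda>t. t powr \<beta> / \<beta>) has_real_derivative x powr (\<beta> - 1)) (at x)"
    using assms by (auto intro!: derivative_eq_intros simp: field_simps)
  show "\<And>x. 0 < ereal x \<Longrightarrow> ereal x < 1 \<Longrightarrow> isCont (\<lambda>t. t powr (\<beta> - 1)) x"
    by (auto intro!: continuous_intros)
  show "AE x in lborel. 0 < ereal x \<longrightarrow> ereal x < 1 \<longrightarrow> 0 \<le> x powr (\<beta> - 1)" by simp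
  show "(((\<lambda>t. t powr \<beta> / \<beta>) \<circ> real_of_ereal) \<longlongrightarrow> 0) (at_right 0)"
    unfolding zero_ereal_def ereal_tendsto_simps
    using assms by (auto intro!: tendsto_eq_intros tendsto_zero_powrI eventually_at_rightI[where b=1])
  show "(((\<lambda>t. t powr \<beta> / \<beta>) \<circ> real_of_ereal) \<longlongrightarrow> 1/\<beta>) (at_left 1)"
    unfolding one_ereal_def ereal_tendsto_simps
    using assms by (auto intro!: tendsto_eq_intros)
qed simp

lemma cplx_1d:
  fixes c :: complex assumes c: "Re c > 0"
  shows "integrable lborel (\<lambda>t. indicator {0..1} t *\<^sub>R complex_of_real t powr (c - 1))"
    and "integral\<^sup>L lborel (\<lambda>t. indicator {0..1} t *\<^sub>R complex_of_real t powr (c - 1)) = 1 / c"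
proof -
  let ?f = "\<lambda>t. complex_of_real t powr (c - 1)"
  have int1: "set_integrable lborel (einterval 0 1) ?f"
  proof (rule set_integrable_bound[OF real_1d_int[OF c]])
    show "set_borel_measurable lborel (einterval 0 1) ?f"
      unfolding set_borel_measurable_def by measurable
    show "AE x in lborel. x \<in> einterval 0 1 \<longrightarrow> norm (?f x) \<le> norm (x powr (Re c - 1))"
      by (auto simp: norm_powr_real_powr einterval_iff)
  qed
  have int2: "set_integrable lborel {0..1} ?f"
    using int1 by (subst set_integrable_discrete_difference[where X="{0,1}"]) (auto simp: einterval_iff)
  then show "integrable lborel (\<lambda>t. indicator {0..1} t *\<^sub>R ?f t)"
    by (simp add: set_integrable_def)
  have "(LBINT t=0..1. ?f t) = 1 / c - 0"
  proof (rule interval_integral_FTC_integrable[where F="\<lambda>t. complex_of_real t powr c / c"])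
    fix x assume x: "0 < ereal x" "ereal x < 1"
    have "((\<lambda>z. z powr c / c) has_field_derivative ?f x) (at (of_real x))"
      using x c by (auto intro!: derivative_eq_intros simp: field_simps complex_nonpos_Reals_iff
         powr_diff)
    then show "((\<lambda>t. complex_of_real t powr c / c) has_vector_derivative ?f x) (at x)"
      by (rule has_vector_derivative_real_field)
    show "isCont ?f x" using x by (auto intro!: continuous_intros simp: complex_nonpos_Reals_iff)
  next
    show "(((\<lambda>t. complex_of_real t powr c / c) \<circ> real_of_ereal) \<longlongrightarrow> 0) (at_right 0)"
      unfolding zero_ereal_def ereal_tendsto_simps
    proof -
      have "((\<lambda>t. complex_of_real t powr c / c) \<longlongrightarrow> complex_of_real 0 powr c / c) (at 0)"
        using isCont_cpowr_real[OF c, of 0] c by (auto intro!: tendsto_eq_intros simp: isCont_def)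
      then show "((\<lambda>t. complex_of_real t powr c / c) \<longlongrightarrow> 0) (at_right 0)"
        by (auto intro: tendsto_mono at_le)
    qed
    show "(((\<lambda>t. complex_of_real t powr c / c) \<circ> real_of_ereal) \<longlongrightarrow> 1 / c) (at_left 1)"
      unfolding one_ereal_def ereal_tendsto_simps
    proof -
      have "((\<lambda>t. complex_of_real t powr c / c) \<longlongrightarrow> complex_of_real 1 powr c / c) (at 1)"
        using isCont_cpowr_real[OF c, of 1] by (intro tendsto_divide tendsto_const) (use c in \<open>auto simp: isCont_def\<close>)
      then show "((\<lambda>t. complex_of_real t powr c / c) \<longlongrightarrow> 1 / c) (at_left 1)"
        by (auto intro: tendsto_mono at_le)
    qed
  qed (use int1 in auto)
  then show "integral\<^sup>L lborel (\<lambda>t. indicator {0..1} t *\<^sub>R ?f t) = 1 / c"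
    using interval_integral_Icc[of 0 1 ?f] by (simp add: set_lebesgue_integral_def zero_ereal_def[symmetric] one_ereal_def[symmetric])
qed




lemma cpowr_prod_real:
  fixes x :: "nat \<Rightarrow> real"
  assumes "finite I" "\<forall>i\<in>I. x i \<ge> 0"
  shows "complex_of_real (\<Prod>i\<in>I. x i) powr c = (\<Prod>i\<in>I. complex_of_real (x i) powr c)"
  using assms
proof (induction I rule: finite_induct)
  case empty then show ?case by simp
next
  case (insert j I)
  have "complex_of_real (\<Prod>i\<in>insert j I. x i) powr c
        = (complex_of_real (x j) * complex_of_real (\<Prod>i\<in>I. x i)) powr c"
    using insert by simp
  also have "\<dots> = complex_of_real (x j) powr c * complex_of_real (\<Prod>i\<in>I. x i) powr c"
    using insert by (intro powr_times_real) (auto simp del: of_real_prod intro!: prod_nonneg)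
  finally show ?case using insert by simp
qed

lemma cube_pow:
  fixes c :: complex assumes c: "Re c > 0"
  shows "integrable (cube_measure s) (\<lambda>x. indicator (unit_cube s) x *\<^sub>R complex_of_real (\<Prod>i\<in>{1..s+1}. x i) powr (c - 1))"
    and "integral\<^sup>L (cube_measure s) (\<lambda>x. indicator (unit_cube s) x *\<^sub>R complex_of_real (\<Prod>i\<in>{1..s+1}. x i) powr (c - 1)) = 1 / c ^ (s+1)"
proof -
  let ?g = "\<lambda>i::nat. \<lambda>t. indicator {0..1} t *\<^sub>R complex_of_real t powr (c - 1)"
  have eq: "indicator (unit_cube s) x *\<^sub>R complex_of_real (\<Prod>i\<in>{1..s+1}. x i) powr (c - 1)
       = (\<Prod>i\<in>{1..s+1}. ?g i (x i))" if "x \<in> space (cube_measure s)" for x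
  proof (cases "x \<in> unit_cube s")
    case True
    then have "\<forall>i\<in>{1..s+1}. x i \<in> {0..1}" by (auto simp: unit_cube_def)
    then have A: "(\<Prod>i\<in>{1..s+1}. ?g i (x i)) = (\<Prod>i\<in>{1..s+1}. complex_of_real (x i) powr (c-1))"
      by (intro prod.cong) auto
    from \<open>\<forall>i\<in>{1..s+1}. x i \<in> {0..1}\<close> have B: "complex_of_real (\<Prod>i\<in>{1..s+1}. x i) powr (c-1) = (\<Prod>i\<in>{1..s+1}. complex_of_real (x i) powr (c-1))"
      by (intro cpowr_prod_real) auto
    show ?thesis unfolding A B indicator_simps(1)[OF True] scaleR_one ..
  next
    case False
    with that obtain i where "i \<in> {1..s+1}" "x i \<notin> {0..1}"
      by (auto simp: unit_cube_def cube_measure_def space_PiM PiE_iff)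
    then have "(\<Prod>j\<in>{1..s+1}. ?g j (x j)) = 0"
      by (intro prod_zero bexI[of _ i]) (auto simp: indicator_def)
    then show ?thesis using False by simp
  qed
  have int1: "integrable lborel (?g i)" for i using cplx_1d(1)[OF c] .
  show "integrable (cube_measure s) (\<lambda>x. indicator (unit_cube s) x *\<^sub>R complex_of_real (\<Prod>i\<in>{1..s+1}. x i) powr (c - 1))"
    apply (subst Bochner_Integration.integrable_cong[OF refl eq], assumption) unfolding cube_measure_def by (rule PS.product_integrable_prod) (auto intro: int1)
  have "integral\<^sup>L (cube_measure s) (\<lambda>x. indicator (unit_cube s) x *\<^sub>R complex_of_real (\<Prod>i\<in>{1..s+1}. x i) powr (c - 1))
      = integral\<^sup>L (cube_measure s) (\<lambda>x. \<Prod>i\<in>{1..s+1}. ?g i (x i))"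
    by (rule Bochner_Integration.integral_cong[OF refl eq])
  also have "\<dots> = (\<Prod>i\<in>{1..s+1}. integral\<^sup>L lborel (?g i))"
    unfolding cube_measure_def by (rule PS.product_integral_prod) (auto intro: int1)
  also have "\<dots> = 1 / c ^ (s+1)"
    by (simp add: cplx_1d(2)[OF c] power_one_over)
  finally show "integral\<^sup>L (cube_measure s) (\<lambda>x. indicator (unit_cube s) x *\<^sub>R complex_of_real (\<Prod>i\<in>{1..s+1}. x i) powr (c - 1)) = 1 / c ^ (s+1)" .
qed




lemma AE_coord_ne:
  assumes "i \<in> {1..s+1}"
  shows "AE x in cube_measure s. x i \<noteq> c"
proof -
  interpret F: finite_product_sigma_finite "\<lambda>_::nat. lborel :: real measure" "{1..s+1}"
    by unfold_locales auto
  let ?N = "PiE {1..s+1} (\<lambda>j. if j = i then {c} else UNIV)"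
  have "emeasure (cube_measure s) ?N = (\<Prod>j\<in>{1..s+1}. emeasure lborel (if j = i then {c} else UNIV))"
    unfolding cube_measure_def by (rule F.measure_times) auto
  also have "\<dots> = 0"
    using assms by (intro prod_zero bexI[of _ i]) auto
  finally have N: "?N \<in> null_sets (cube_measure s)"
    by (auto simp: null_sets_def cube_measure_def intro!: sets_PiM_I_finite)
  show ?thesis
  proof (rule AE_I'[OF N])
    show "{x \<in> space (cube_measure s). \<not> x i \<noteq> c} \<subseteq> ?N"
    proof
      fix x assume "x \<in> {x \<in> space (cube_measure s). \<not> x i \<noteq> c}"
      then have "x \<in> PiE {1..s+1} (\<lambda>_. UNIV)" "x i = c"
        by (auto simp: cube_measure_def space_PiM)
      then show "x \<in> ?N" unfolding PiE_iff by auto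
    qed
  qed
qed

lemma prod_lt_1:
  fixes x :: "nat \<Rightarrow> real"
  assumes "\<forall>i\<in>{1..s+1}. 0 < x i \<and> x i < 1"
  shows "0 < (\<Prod>i\<in>{1..s+1}. x i) \<and> (\<Prod>i\<in>{1..s+1}. x i) < 1"
proof
  show "0 < (\<Prod>i\<in>{1..s+1}. x i)" using assms by (intro prod_pos) auto
  have h: "\<And>i. i\<in>{1..s+1} \<Longrightarrow> 0 \<le> x i \<and> x i \<le> 1" using assms by (metis less_imp_le)
  have "{1..s+1} = insert (s+1) {1..s}" by auto
  then have "(\<Prod>i\<in>{1..s+1}. x i) = x (s+1) * (\<Prod>i\<in>{1..s}. x i)" by simp
  also have "\<dots> \<le> x (s+1) * 1"
    using h by (intro mult_left_mono prod_le_1) auto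
  also have "\<dots> < 1" using assms by auto
  finally show "(\<Prod>i\<in>{1..s+1}. x i) < 1" .
qed

lemma AE_P:
  "AE x in cube_measure s. x \<in> unit_cube s \<longrightarrow> 0 < (\<Prod>i\<in>{1..s+1}. x i) \<and> (\<Prod>i\<in>{1..s+1}. x i) < 1"
proof -
  have "AE x in cube_measure s. \<forall>i\<in>{1..s+1}. x i \<noteq> 0 \<and> x i \<noteq> 1"
    by (intro AE_finite_allI) (auto intro: AE_coord_ne)
  then show ?thesis
  proof eventually_elim
    case (elim x)
    show ?case
    proof
      assume "x \<in> unit_cube s"
      then have "\<forall>i\<in>{1..s+1}. 0 \<le> x i \<and> x i \<le> 1" by (auto simp: unit_cube_def)
      with elim have "\<forall>i\<in>{1..s+1}. 0 < x i \<and> x i < 1" by force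
      then show "0 < (\<Prod>i\<in>{1..s+1}. x i) \<and> (\<Prod>i\<in>{1..s+1}. x i) < 1" by (rule prod_lt_1)
    qed
  qed
qed

lemma exp_int_real:
  fixes p :: real assumes p: "0 < p" "p < 1"
  shows "(\<integral>\<^sup>+u. ennreal (indicator {0..} u * p powr u) \<partial>lborel) = ennreal (1 / (- ln p))"
    and "has_bochner_integral lborel (\<lambda>u. indicator {0..} u * p powr u) (1 / (- ln p))"
proof -
  have lnp: "ln p < 0" using p by simp
  have "(\<integral>\<^sup>+u. ennreal (p powr u) * indicator {0..} u \<partial>lborel) = 0 - p powr 0 / ln p"
  proof (rule nn_integral_FTC_atLeast[where F="\<lambda>u. p powr u / ln p"])
    show "\<And>x. 0 \<le> x \<Longrightarrow> ((\<lambda>u. p powr u / ln p) has_real_derivative p powr x) (at x)"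
      using p lnp by (auto intro!: derivative_eq_intros)
    have "((\<lambda>u. exp (ln p * u)) \<longlongrightarrow> 0) at_top"
      by (rule exp_at_bot[THEN filterlim_compose], rule filterlim_tendsto_neg_mult_at_bot[OF tendsto_const lnp filterlim_ident])
    then have "((\<lambda>u. p powr u) \<longlongrightarrow> 0) at_top"
      using p by (simp add: powr_def mult.commute)
    then show "((\<lambda>u. p powr u / ln p) \<longlongrightarrow> 0) at_top"
      by (rule tendsto_divide_zero)
  qed auto
  then show nn: "(\<integral>\<^sup>+u. ennreal (indicator {0..} u * p powr u) \<partial>lborel) = ennreal (1 / (- ln p))"
  proof -
    have "\<And>u. ennreal (indicator {0..} u * p powr u) = ennreal (p powr u) * indicator {0..} u"
      by (auto split: split_indicator)
    then show ?thesis using \<open>(\<integral>\<^sup>+u. ennreal (p powr u) * indicator {0..} u \<partial>lborel) = 0 - p powr 0 / ln p\<close> p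
      by simp
  qed
  show "has_bochner_integral lborel (\<lambda>u. indicator {0..} u * p powr u) (1 / (- ln p))"
    by (rule has_bochner_integral_nn_integral[OF _ _ _ nn]) (use lnp in auto)
qed




lemma DERIV_neg_inv_pow:
  fixes w c :: "'a::{real_normed_field, field_char_0}"
  assumes nz: "c + w \<noteq> 0" and s: "s \<ge> 1"
  shows "((\<lambda>z. - 1 / (of_nat s * (c + z) ^ s)) has_field_derivative 1 / (c + w) ^ (s+1)) (at w within S)"
proof -
  have eq: "(\<lambda>z. - 1 / (of_nat s * (c + z) ^ s)) = (\<lambda>z. - (1 / of_nat s) * power_int (c + z) (- int s))"
    by (auto simp: fun_eq_iff power_int_minus field_simps)
  have "((\<lambda>z. - (1 / of_nat s) * power_int (c + z) (- int s)) has_field_derivative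
          - (1 / of_nat s) * (of_int (- int s) * power_int (c + w) (- int s - 1) * (0 + 1))) (at w within S)"
    using nz by (intro DERIV_cmult DERIV_power_int DERIV_add[OF DERIV_const DERIV_ident]) auto
  also have "- (1 / of_nat s) * (of_int (- int s) * power_int (c + w) (- int s - 1) * (0 + 1)) = power_int (c + w) (- int (s+1))"
    using s by (simp add: field_simps) (rule arg_cong[where f="power_int (c+w)"], simp)
  also have "\<dots> = 1 / (c + w) ^ (s+1)"
    unfolding power_int_minus power_int_of_nat by (simp add: divide_inverse)
  finally show ?thesis unfolding eq .
qed

definition Pr :: "nat \<Rightarrow> (nat \<Rightarrow> real) \<Rightarrow> real" where
  "Pr s x = (\<Prod>i\<in>{1..s+1}. x i)"

lemma Pr_meas[measurable]: "Pr s \<in> borel_measurable (cube_measure s)"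
  unfolding Pr_def cube_measure_def by measurable

lemma cube_sets[measurable]: "unit_cube s \<in> sets (cube_measure s)"
  unfolding unit_cube_def cube_measure_def by (rule sets_PiM_I_finite) auto

lemma Pr_nonneg: "x \<in> unit_cube s \<Longrightarrow> Pr s x \<ge> 0"
  unfolding Pr_def unit_cube_def by (intro prod_nonneg) (auto simp: PiE_iff)

lemma cube_pow_real:
  fixes \<gamma> :: real assumes g: "\<gamma> > 0"
  shows "(\<integral>\<^sup>+x. ennreal (indicator (unit_cube s) x * Pr s x powr (\<gamma> - 1)) \<partial>cube_measure s) = ennreal (1 / \<gamma> ^ (s+1))"
proof -
  let ?f = "\<lambda>x. indicator (unit_cube s) x * Pr s x powr (\<gamma> - 1)"
  have eq: "indicator (unit_cube s) x *\<^sub>R complex_of_real (\<Prod>i\<in>{1..s+1}. x i) powr (complex_of_real \<gamma> - 1)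
     = complex_of_real (?f x)" for x
  proof (cases "x \<in> unit_cube s")
    case True
    have "complex_of_real (\<Prod>i\<in>{1..s+1}. x i) powr (complex_of_real \<gamma> - 1)
        = complex_of_real (Pr s x) powr (complex_of_real (\<gamma> - 1))" by (simp add: Pr_def)
    also have "\<dots> = complex_of_real (Pr s x powr (\<gamma> - 1))"
      using Pr_nonneg[OF True] by (rule powr_of_real)
    finally show ?thesis using True by simp
  qed simp
  have h: "Re (complex_of_real \<gamma>) > 0" using g by simp
  have "integrable (cube_measure s) (\<lambda>x. complex_of_real (?f x))"
    using cube_pow(1)[OF h, of s, unfolded eq] .
  then have int: "integrable (cube_measure s) ?f" using complex_of_real_integrable_eq by blast
  have "integral\<^sup>L (cube_measure s) (\<lambda>x. complex_of_real (?f x)) = 1 / complex_of_real \<gamma> ^ (s+1)"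
    using cube_pow(2)[OF h, of s, unfolded eq] .
  then have "complex_of_real (integral\<^sup>L (cube_measure s) ?f) = 1 / complex_of_real \<gamma> ^ (s+1)"
    by (simp only: integral_complex_of_real)
  then have "complex_of_real (integral\<^sup>L (cube_measure s) ?f) = complex_of_real (1 / \<gamma> ^ (s+1))"
    by simp
  then have val: "integral\<^sup>L (cube_measure s) ?f = 1 / \<gamma> ^ (s+1)"
    by (simp only: of_real_eq_iff)
  have "(\<integral>\<^sup>+x. ennreal (?f x) \<partial>cube_measure s) = ennreal (integral\<^sup>L (cube_measure s) ?f)"
    by (rule nn_integral_eq_integral[OF int]) (auto simp: Pr_nonneg)
  then show ?thesis using val by simp
qed

lemma outer_nn:
  fixes \<beta> :: real assumes b: "\<beta> > 0" and s: "s \<ge> 1"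
  shows "(\<integral>\<^sup>+u. ennreal (1 / (\<beta> + u) ^ (s+1)) * indicator {0..} u \<partial>lborel) = ennreal (1 / (real s * \<beta> ^ s))"
proof -
  have "(\<integral>\<^sup>+u. ennreal (1 / (\<beta> + u) ^ (s+1)) * indicator {0..} u \<partial>lborel) = 0 - (- 1 / (real s * (\<beta> + 0) ^ s))"
  proof (rule nn_integral_FTC_atLeast[where F="\<lambda>u. - 1 / (real s * (\<beta> + u) ^ s)"])
    fix x :: real assume x: "0 \<le> x"
    have pos: "\<beta> + x > 0" using b x by simp
    show "((\<lambda>u. - 1 / (real s * (\<beta> + u) ^ s)) has_real_derivative 1 / (\<beta> + x) ^ (s+1)) (at x)"
      using DERIV_neg_inv_pow[of \<beta> x s UNIV] pos s by simp
  next
    have "filterlim (\<lambda>u. real s * (\<beta> + u) ^ s) at_top at_top"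
      using s by (intro filterlim_tendsto_pos_mult_at_top[OF tendsto_const] filterlim_pow_at_top filterlim_tendsto_add_at_top[OF tendsto_const filterlim_ident]) auto
    then have "((\<lambda>u. 1 / (real s * (\<beta> + u) ^ s)) \<longlongrightarrow> 0) at_top"
      by (simp add: tendsto_divide_0[OF tendsto_const] filterlim_at_top_imp_at_infinity)
    then show "((\<lambda>u. - 1 / (real s * (\<beta> + u) ^ s)) \<longlongrightarrow> 0) at_top"
      using tendsto_minus by fastforce
  qed (use b in auto)
  then show ?thesis by simp
qed




lemma key:
  fixes b :: complex assumes b: "Re b > 0" and s: "s \<ge> 1"
  shows key_int: "integrable (cube_measure s) (\<lambda>x. indicator (unit_cube s) x *\<^sub>R (complex_of_real (Pr s x) powr (b - 1) / complex_of_real (- ln (Pr s x))))"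
    and key_val: "integral\<^sup>L (cube_measure s) (\<lambda>x. indicator (unit_cube s) x *\<^sub>R (complex_of_real (Pr s x) powr (b - 1) / complex_of_real (- ln (Pr s x)))) = 1 / (of_nat s * b ^ s)"
    and key_nn: "(\<integral>\<^sup>+x. ennreal (indicator (unit_cube s) x * (Pr s x powr (Re b - 1) / (- ln (Pr s x)))) \<partial>cube_measure s) = ennreal (1 / (real s * Re b ^ s))"
proof -
  define \<beta> where "\<beta> = Re b"
  have \<beta>: "\<beta> > 0" using b \<beta>_def by simp
  interpret M: sigma_finite_measure "cube_measure s"
    unfolding cube_measure_def by (rule PS.sigma_finite) simp
  interpret PSF: pair_sigma_finite "cube_measure s" "lborel :: real measure"
    by (intro pair_sigma_finite.intro M.sigma_finite_measure_axioms lborel.sigma_finite_measure_axioms)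
  define g where "g x u = indicator (unit_cube s) x *\<^sub>R (indicator {0..} u *\<^sub>R complex_of_real (Pr s x) powr (b + complex_of_real u - 1))" for x u
  define K where "K x = indicator (unit_cube s) x *\<^sub>R (complex_of_real (Pr s x) powr (b - 1) / complex_of_real (- ln (Pr s x)))" for x
  have g_meas[measurable]: "(\<lambda>(x,u). g x u) \<in> borel_measurable (cube_measure s \<Otimes>\<^sub>M lborel)"
    unfolding g_def by measurable
  have K_meas[measurable]: "K \<in> borel_measurable (cube_measure s)"
    unfolding K_def by measurable
  have norm_g: "norm (g x u) = indicator (unit_cube s) x * (indicator {0..} u * Pr s x powr (\<beta> + u - 1))" for x u
    unfolding g_def using Pr_nonneg[of x s] by (auto simp: indicator_def norm_powr_real_powr \<beta>_def)
  have inner_nn: "(\<integral>\<^sup>+x. ennreal (norm (g x u)) \<partial>cube_measure s) = ennreal (1 / (\<beta> + u) ^ (s+1)) * indicator {0..} u" for u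
  proof (cases "u \<ge> 0")
    case True
    then have "(\<integral>\<^sup>+x. ennreal (norm (g x u)) \<partial>cube_measure s) = (\<integral>\<^sup>+x. ennreal (indicator (unit_cube s) x * Pr s x powr ((\<beta> + u) - 1)) \<partial>cube_measure s)"
      by (simp add: norm_g)
    also have "\<dots> = ennreal (1 / (\<beta> + u) ^ (s+1))"
      using \<beta> True by (intro cube_pow_real) simp
    finally show ?thesis using True by simp
  next
    case False
    then show ?thesis by (simp add: norm_g)
  qed
  have pair_nn: "(\<integral>\<^sup>+p. ennreal (norm (case_prod g p)) \<partial>(cube_measure s \<Otimes>\<^sub>M lborel)) = ennreal (1 / (real s * \<beta> ^ s))"
  proof -
    have "(\<integral>\<^sup>+p. ennreal (norm (case_prod g p)) \<partial>(cube_measure s \<Otimes>\<^sub>M lborel))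
       = (\<integral>\<^sup>+u. (\<integral>\<^sup>+x. ennreal (norm (g x u)) \<partial>cube_measure s) \<partial>lborel)"
      by (subst PSF.nn_integral_snd[symmetric]) auto
    also have "\<dots> = (\<integral>\<^sup>+u. ennreal (1 / (\<beta> + u) ^ (s+1)) * indicator {0..} u \<partial>lborel)"
      by (simp add: inner_nn)
    also have "\<dots> = ennreal (1 / (real s * \<beta> ^ s))"
      by (rule outer_nn[OF \<beta> s])
    finally show ?thesis .
  qed
  have int_pair: "integrable (cube_measure s \<Otimes>\<^sub>M lborel) (\<lambda>(x,u). g x u)"
    by (rule integrable_iff_bounded[THEN iffD2]) (use pair_nn in auto)
  have ae_nn: "AE x in cube_measure s. (\<integral>\<^sup>+u. ennreal (norm (g x u)) \<partial>lborel)
       = ennreal (indicator (unit_cube s) x * (Pr s x powr (\<beta> - 1) / (- ln (Pr s x))))"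
    using AE_P[of s]
  proof eventually_elim
    case (elim x)
    show ?case
    proof (cases "x \<in> unit_cube s")
      case True
      with elim have P: "0 < Pr s x" "Pr s x < 1" by (auto simp: Pr_def)
      have "\<And>u. ennreal (norm (g x u)) = ennreal (Pr s x powr (\<beta> - 1)) * ennreal (indicator {0..} u * Pr s x powr u)"
        using True P by (simp add: norm_g ennreal_mult'[symmetric] powr_add[symmetric] algebra_simps)
      then have "(\<integral>\<^sup>+u. ennreal (norm (g x u)) \<partial>lborel) = ennreal (Pr s x powr (\<beta> - 1)) * (\<integral>\<^sup>+u. ennreal (indicator {0..} u * Pr s x powr u) \<partial>lborel)"
        by (simp add: nn_integral_cmult)
      also have "\<dots> = ennreal (Pr s x powr (\<beta> - 1)) * ennreal (1 / (- ln (Pr s x)))"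
        using exp_int_real(1)[OF P] by simp
      also have "\<dots> = ennreal (indicator (unit_cube s) x * (Pr s x powr (\<beta> - 1) / (- ln (Pr s x))))"
        using True P by (simp add: ennreal_mult'[symmetric])
      finally show ?thesis .
    next
      case False
      then show ?thesis by (simp add: norm_g)
    qed
  qed
  show "(\<integral>\<^sup>+x. ennreal (indicator (unit_cube s) x * (Pr s x powr (Re b - 1) / (- ln (Pr s x)))) \<partial>cube_measure s) = ennreal (1 / (real s * Re b ^ s))"
  proof -
    have "(\<integral>\<^sup>+x. ennreal (indicator (unit_cube s) x * (Pr s x powr (Re b - 1) / (- ln (Pr s x)))) \<partial>cube_measure s)
        = (\<integral>\<^sup>+x. (\<integral>\<^sup>+u. ennreal (norm (g x u)) \<partial>lborel) \<partial>cube_measure s)"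
      unfolding \<beta>_def[symmetric] by (rule nn_integral_cong_AE) (use ae_nn in auto)
    also have "\<dots> = (\<integral>\<^sup>+p. ennreal (norm (case_prod g p)) \<partial>(cube_measure s \<Otimes>\<^sub>M lborel))"
      by (subst lborel.nn_integral_fst[symmetric]) auto
    finally show ?thesis using pair_nn \<beta>_def by simp
  qed
  have fub1: "(\<integral>u. (\<integral>x. g x u \<partial>cube_measure s) \<partial>lborel) = integral\<^sup>L (cube_measure s \<Otimes>\<^sub>M lborel) (\<lambda>(x,u). g x u)"
    by (rule PSF.integral_snd[OF int_pair])
  have fub2: "(\<integral>x. (\<integral>u. g x u \<partial>lborel) \<partial>cube_measure s) = integral\<^sup>L (cube_measure s \<Otimes>\<^sub>M lborel) (\<lambda>(x,u). g x u)"
    by (rule PSF.integral_fst[OF int_pair])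
  have intx: "integrable (cube_measure s) (\<lambda>x. \<integral>u. g x u \<partial>lborel)"
    by (rule PSF.integrable_fst[OF int_pair])
  have intu: "integrable lborel (\<lambda>u. \<integral>x. g x u \<partial>cube_measure s)"
    by (rule PSF.integrable_snd[OF int_pair])
  define f1 where "f1 u = 1 / (b + complex_of_real u) ^ (s+1)" for u
  have nz: "b + complex_of_real u \<noteq> 0" if "u \<ge> 0" for u
  proof
    assume "b + complex_of_real u = 0"
    then have "Re (b + complex_of_real u) = 0" by simp
    with b that show False by simp
  qed
  have inner_x: "(\<integral>x. g x u \<partial>cube_measure s) = indicator {0..} u *\<^sub>R f1 u" for u
  proof (cases "u \<ge> 0")
    case True
    have c: "Re (b + complex_of_real u) > 0" using b True by simp
    have "(\<integral>x. g x u \<partial>cube_measure s) = integral\<^sup>L (cube_measure s) (\<lambda>x. indicator (unit_cube s) x *\<^sub>R complex_of_real (\<Prod>i\<in>{1..s+1}. x i) powr ((b + complex_of_real u) - 1))"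
      using True by (simp add: g_def Pr_def)
    also have "\<dots> = 1 / (b + complex_of_real u) ^ (s+1)"
      by (rule cube_pow(2)[OF c])
    finally show ?thesis using True by (simp add: f1_def)
  next
    case False
    then show ?thesis by (simp add: g_def)
  qed
  have setint: "set_integrable lborel {0..} f1"
    using intu unfolding set_integrable_def inner_x .
  have outer: "(\<integral>u. indicator {0..} u *\<^sub>R f1 u \<partial>lborel) = 1 / (of_nat s * b ^ s)"
  proof -
    have ei: "einterval 0 \<infinity> = {0::real<..}" by (auto simp: einterval_iff)
    have si: "set_integrable lborel (einterval 0 \<infinity>) f1"
      unfolding ei by (rule set_integrable_subset[OF setint]) auto
    define F where "F u = - 1 / (of_nat s * (b + complex_of_real u) ^ s)" for u
    have "(LBINT u=0..\<infinity>. f1 u) = 0 - F 0"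
    proof (rule interval_integral_FTC_integrable[where F=F])
      fix x assume x: "0 < ereal x" "ereal x < \<infinity>"
      then have x0: "x \<ge> 0" by simp
      have "((\<lambda>z. - 1 / (of_nat s * (b + z) ^ s)) has_field_derivative 1 / (b + of_real x)^(s+1)) (at (of_real x))"
        using DERIV_neg_inv_pow[of b "of_real x" s UNIV] nz[OF x0] s by simp
      then show "(F has_vector_derivative f1 x) (at x)"
        unfolding F_def f1_def by (rule has_vector_derivative_real_field)
      show "isCont f1 x" unfolding f1_def using nz[OF x0] by (auto intro!: continuous_intros)
    next
      show "set_integrable lborel (einterval 0 \<infinity>) f1" by (rule si)
      have "isCont F 0" unfolding F_def using nz[of 0] s by (auto intro!: continuous_intros)
      then have "(F \<longlongrightarrow> F 0) (at_right 0)"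
        by (auto simp: isCont_def intro: tendsto_mono at_le)
      then show "((F \<circ> real_of_ereal) \<longlongrightarrow> F 0) (at_right 0)"
        unfolding zero_ereal_def ereal_tendsto_simps .
      have "\<forall>\<^sub>F u in at_top. - norm b + u \<le> norm (b + complex_of_real u)"
      proof (intro always_eventually allI)
        fix u :: real
        have "norm (complex_of_real u) \<le> norm (b + complex_of_real u) + norm b"
          using norm_triangle_ineq[of "b + complex_of_real u" "-b"] by simp
        then show "- norm b + u \<le> norm (b + complex_of_real u)" by simp
      qed
      then have "filterlim (\<lambda>u. norm (b + complex_of_real u)) at_top at_top"
        by (intro filterlim_at_top_mono[OF filterlim_tendsto_add_at_top[OF tendsto_const filterlim_ident]])
      then have "filterlim (\<lambda>u. b + complex_of_real u) at_infinity at_top"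
        by (simp add: filterlim_at_infinity_conv_norm_at_top)
      then have inv: "((\<lambda>u. inverse (b + complex_of_real u)) \<longlongrightarrow> 0) at_top"
        by (rule filterlim_compose[OF tendsto_inverse_0])
      have "((\<lambda>u. - (1 / of_nat s) * inverse (b + complex_of_real u) ^ s) \<longlongrightarrow> - (1 / of_nat s) * 0 ^ s) at_top"
        by (intro tendsto_mult tendsto_const tendsto_power inv)
      moreover have "F = (\<lambda>u. - (1 / of_nat s) * inverse (b + complex_of_real u) ^ s)"
        by (auto simp: F_def fun_eq_iff field_simps power_inverse)
      ultimately have "(F \<longlongrightarrow> 0) at_top" using s by (subst (asm) power_0_left) (simp split: if_splits)
      then show "((F \<circ> real_of_ereal) \<longlongrightarrow> 0) (at_left \<infinity>)"
        unfolding ereal_tendsto_simps .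
    qed simp
    also have "0 - F 0 = 1 / (of_nat s * b ^ s)" by (simp add: F_def)
    finally have 1: "(LBINT u=0..\<infinity>. f1 u) = 1 / (of_nat s * b ^ s)" .
    have "(LBINT u=0..\<infinity>. f1 u) = (LINT u:{0<..}|lborel. f1 u)"
      using interval_integral_Ioi[of 0 f1] by (simp add: zero_ereal_def)
    also have "\<dots> = (LINT u:{0..}|lborel. f1 u)"
      by (rule set_integral_discrete_difference[where X="{0}"]) auto
    finally show ?thesis using 1 by (simp add: set_lebesgue_integral_def)
  qed
  have ae_x: "AE x in cube_measure s. (\<integral>u. g x u \<partial>lborel) = K x"
    using AE_P[of s]
  proof eventually_elim
    case (elim x)
    show ?case
    proof (cases "x \<in> unit_cube s")
      case True
      with elim have P: "0 < Pr s x" "Pr s x < 1" by (auto simp: Pr_def)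
      have "\<And>u. g x u = complex_of_real (Pr s x) powr (b - 1) * complex_of_real (indicator {0..} u * Pr s x powr u)"
      proof -
        fix u
        have "complex_of_real (Pr s x) powr (b + complex_of_real u - 1) = complex_of_real (Pr s x) powr ((b - 1) + complex_of_real u)"
          by (simp add: algebra_simps)
        also have "\<dots> = complex_of_real (Pr s x) powr (b - 1) * complex_of_real (Pr s x powr u)"
          using P by (simp add: powr_add powr_of_real)
        finally show "g x u = complex_of_real (Pr s x) powr (b - 1) * complex_of_real (indicator {0..} u * Pr s x powr u)"
          using True by (simp add: g_def indicator_def)
      qed
      then have "(\<integral>u. g x u \<partial>lborel) = (\<integral>u. complex_of_real (Pr s x) powr (b - 1) * complex_of_real (indicator {0..} u * Pr s x powr u) \<partial>lborel)"
        by (simp only:)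
      also have "\<dots> = complex_of_real (Pr s x) powr (b - 1) * complex_of_real (\<integral>u. indicator {0..} u * Pr s x powr u \<partial>lborel)"
        by (simp only: integral_mult_right_zero integral_complex_of_real)
      also have "(\<integral>u. indicator {0..} u * Pr s x powr u \<partial>lborel) = 1 / (- ln (Pr s x))"
        using exp_int_real(2)[OF P] by (rule has_bochner_integral_integral_eq)
      finally show ?thesis using True by (simp add: K_def divide_inverse)
    next
      case False
      then show ?thesis by (simp add: g_def K_def)
    qed
  qed
  have intK: "integrable (cube_measure s) K"
    using intx by (rule integrable_cong_AE_imp) (use ae_x in auto)
  then show "integrable (cube_measure s) (\<lambda>x. indicator (unit_cube s) x *\<^sub>R (complex_of_real (Pr s x) powr (b - 1) / complex_of_real (- ln (Pr s x))))"
    unfolding K_def .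
  have "integral\<^sup>L (cube_measure s) K = (\<integral>x. (\<integral>u. g x u \<partial>lborel) \<partial>cube_measure s)"
    by (rule integral_cong_AE) (use ae_x in auto)
  also have "\<dots> = (\<integral>u. (\<integral>x. g x u \<partial>cube_measure s) \<partial>lborel)"
    using fub1 fub2 by simp
  also have "\<dots> = 1 / (of_nat s * b ^ s)"
    unfolding inner_x by (rule outer)
  finally show "integral\<^sup>L (cube_measure s) (\<lambda>x. indicator (unit_cube s) x *\<^sub>R (complex_of_real (Pr s x) powr (b - 1) / complex_of_real (- ln (Pr s x)))) = 1 / (of_nat s * b ^ s)"
    unfolding K_def .
qed




lemma norm_z_le_1:
  fixes z a :: complex
  assumes sum: "summable (\<lambda>k. z ^ k / (of_nat k + a) ^ s)"
    and nz: "\<forall>k::nat. of_nat k + a \<noteq> 0"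
  shows "norm z \<le> 1"
proof (rule ccontr)
  assume "\<not> norm z \<le> 1"
  then have r: "norm z > 1" by simp
  define A where "A = norm a + 1"
  have A: "A > 0" unfolding A_def using norm_ge_zero[of a] by linarith
  define t where "t k = norm z ^ k / (real k + A) ^ s" for k :: nat
  have tpos: "t k > 0" for k using r A unfolding t_def by (intro divide_pos_pos zero_less_power) auto
  have tle: "t k \<le> norm (z ^ k / (of_nat k + a) ^ s)" for k
  proof -
    have "norm (of_nat k + a) \<le> real k + norm a" using norm_triangle_ineq[of "of_nat k" a] by simp
    also have "\<dots> \<le> real k + A" by (simp add: A_def)
    finally have le: "norm (of_nat k + a) \<le> real k + A" .
    have pos: "norm (of_nat k + a) > 0" using nz by simp
    have "norm (of_nat k + a) ^ s \<le> (real k + A) ^ s" using le pos by (intro power_mono) auto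
    then have "norm z ^ k / (real k + A) ^ s \<le> norm z ^ k / norm (of_nat k + a) ^ s"
      using pos r A by (intro divide_left_mono mult_pos_pos zero_less_power) auto
    then show ?thesis by (simp add: t_def norm_divide norm_power)
  qed
  have "(\<lambda>k. z ^ k / (of_nat k + a) ^ s) \<longlonglongrightarrow> 0"
    using sum by (rule summable_LIMSEQ_zero)
  then have "(\<lambda>k. norm (z ^ k / (of_nat k + a) ^ s)) \<longlonglongrightarrow> 0"
    by (rule tendsto_norm_zero)
  then have t0: "t \<longlonglongrightarrow> 0"
    by (rule tendsto_sandwich[rotated 2, OF tendsto_const]) (auto intro: always_eventually less_imp_le tpos tle)
  have "(\<lambda>k. inverse ((1 + A) + real k)) \<longlonglongrightarrow> 0"
    by (intro tendsto_inverse_0_at_top filterlim_tendsto_add_at_top[OF tendsto_const filterlim_real_sequentially])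
  then have "(\<lambda>k. 1 - inverse ((1 + A) + real k)) \<longlonglongrightarrow> 1 - 0"
    by (intro tendsto_diff tendsto_const)
  moreover have "(\<lambda>k. 1 - inverse ((1 + A) + real k)) = (\<lambda>k. (real k + A) / (real k + 1 + A))"
    using A by (auto simp: fun_eq_iff field_simps)
  ultimately have "(\<lambda>k. (real k + A) / (real k + 1 + A)) \<longlonglongrightarrow> 1" by simp
  then have "(\<lambda>k. norm z * ((real k + A) / (real k + 1 + A)) ^ s) \<longlonglongrightarrow> norm z * 1 ^ s"
    by (intro tendsto_mult tendsto_const tendsto_power)
  then have "eventually (\<lambda>k. norm z * ((real k + A) / (real k + 1 + A)) ^ s > 1) sequentially"
    using r by (intro order_tendstoD(1)) auto
  then obtain N where N: "\<And>k. k \<ge> N \<Longrightarrow> norm z * ((real k + A) / (real k + 1 + A)) ^ s > 1"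
    by (auto simp: eventually_sequentially)
  have stp: "t (Suc k) > t k" if "k \<ge> N" for k
  proof -
    have "t (Suc k) = t k * (norm z * ((real k + A) / (real k + 1 + A)) ^ s)"
      using A by (simp add: t_def field_simps power_divide)
    also have "\<dots> > t k * 1" using N[OF that] tpos[of k] by (intro mult_strict_left_mono) auto
    finally show ?thesis by simp
  qed
  have mono: "t k \<ge> t N" if "k \<ge> N" for k
    using that
  proof (induction k rule: dec_induct)
    case (step k) then show ?case using stp[of k] by simp
  qed simp
  have "eventually (\<lambda>k. t k < t N) sequentially"
    using t0 tpos[of N] by (intro order_tendstoD(2)) auto
  then obtain M where "\<And>k. k \<ge> M \<Longrightarrow> t k < t N" by (auto simp: eventually_sequentially)
  then have "t (max M N) < t N" by simp
  moreover have "t (max M N) \<ge> t N" by (rule mono) simp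
  ultimately show False by simp
qed

definition LF :: "nat \<Rightarrow> complex \<Rightarrow> complex \<Rightarrow> (nat \<Rightarrow> real) \<Rightarrow> complex" where
  "LF s z a x = (- of_nat s * complex_of_real (Pr s x) powr (a - 1)) / ((1 - z * complex_of_real (Pr s x)) * complex_of_real (ln (Pr s x)))"

lemma LF_meas[measurable]: "LF s z a \<in> borel_measurable (cube_measure s)"
  unfolding LF_def by measurable

lemma norm_LF_lower:
  fixes z a :: complex and t :: real
  assumes s: "s \<ge> 1" and z: "norm z \<le> 1" and P: "0 < Pr s x" "Pr s x < 1" and t: "Re a \<le> t"
  shows "real s / 2 * (Pr s x powr (t - 1) / (- ln (Pr s x))) \<le> norm (LF s z a x)"
proof -
  let ?P = "Pr s x"
  have L: "- ln ?P > 0" using P by simp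
  have n1: "norm (1 - z * complex_of_real ?P) \<le> 2"
  proof -
    have "norm (1 - z * complex_of_real ?P) \<le> 1 + norm z * ?P"
      using norm_triangle_ineq4[of 1 "z * complex_of_real ?P"] P by (simp add: norm_mult)
    also have "\<dots> \<le> 1 + 1 * 1" using z P by (intro add_left_mono mult_mono) auto
    finally show ?thesis by simp
  qed
  have n2: "norm (1 - z * complex_of_real ?P) > 0"
  proof -
    have "norm z * ?P \<le> 1 * ?P" using z P by (intro mult_right_mono) auto
    then have "norm z * ?P < 1" using P by linarith
    then have "1 - norm (z * complex_of_real ?P) > 0" using P by (simp add: norm_mult)
    also have "1 - norm (z * complex_of_real ?P) \<le> norm (1 - z * complex_of_real ?P)"
      using norm_triangle_ineq2[of 1 "z * complex_of_real ?P"] by (simp add: norm_minus_commute)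
    finally show ?thesis .
  qed
  have pw: "?P powr (t - 1) \<le> ?P powr (Re a - 1)"
    using t P by (intro powr_mono') auto
  have nLF: "norm (LF s z a x) = real s * ?P powr (Re a - 1) / (norm (1 - z * complex_of_real ?P) * (- ln ?P))"
    using P by (simp add: LF_def norm_divide norm_mult norm_powr_real_powr)
  have "real s / 2 * (?P powr (t - 1) / (- ln ?P)) = real s * ?P powr (t - 1) / (2 * (- ln ?P))"
    by simp
  also have "\<dots> \<le> real s * ?P powr (Re a - 1) / (2 * (- ln ?P))"
    using pw L by (intro divide_right_mono mult_left_mono) auto
  also have "\<dots> \<le> real s * ?P powr (Re a - 1) / (norm (1 - z * complex_of_real ?P) * (- ln ?P))"
    using n1 n2 L by (intro divide_left_mono mult_right_mono mult_pos_pos) auto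
  finally show ?thesis using nLF by simp
qed

lemma Re_a_pos:
  fixes z a :: complex
  assumes s: "s \<ge> 1" and z: "norm z \<le> 1"
    and int: "integrable (cube_measure s) (\<lambda>x. indicator (unit_cube s) x *\<^sub>R LF s z a x)"
  shows "Re a > 0"
proof (rule ccontr)
  assume "\<not> Re a > 0"
  then have a: "Re a \<le> 0" by simp
  let ?G = "\<lambda>x. indicator (unit_cube s) x *\<^sub>R LF s z a x"
  let ?Q = "\<integral>\<^sup>+x. ennreal (norm (?G x)) \<partial>cube_measure s"
  have fin: "?Q < \<infinity>" using int by (simp add: integrable_iff_bounded)
  have lower: "ennreal (1 / (2 * t ^ s)) \<le> ?Q" if t: "0 < t" for t :: real
  proof -
    have "ennreal (1 / (2 * t ^ s)) = ennreal (real s / 2) * ennreal (1 / (real s * t ^ s))"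
      using s t by (simp add: ennreal_mult'[symmetric] field_simps)
    also have "ennreal (1 / (real s * t ^ s)) = (\<integral>\<^sup>+x. ennreal (indicator (unit_cube s) x * (Pr s x powr (t - 1) / (- ln (Pr s x)))) \<partial>cube_measure s)"
      using key_nn[of "complex_of_real t" s] s t by simp
    also have "ennreal (real s / 2) * \<dots> = (\<integral>\<^sup>+x. ennreal (real s / 2) * ennreal (indicator (unit_cube s) x * (Pr s x powr (t - 1) / (- ln (Pr s x)))) \<partial>cube_measure s)"
      by (rule nn_integral_cmult[symmetric]) measurable
    also have "\<dots> = (\<integral>\<^sup>+x. ennreal (real s / 2 * (indicator (unit_cube s) x * (Pr s x powr (t - 1) / (- ln (Pr s x))))) \<partial>cube_measure s)"
      by (intro nn_integral_cong, rule ennreal_mult'[symmetric]) simp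
    also have "\<dots> \<le> ?Q"
    proof (rule nn_integral_mono_AE)
      show "AE x in cube_measure s. ennreal (real s / 2 * (indicator (unit_cube s) x * (Pr s x powr (t - 1) / (- ln (Pr s x))))) \<le> ennreal (norm (?G x))"
        using AE_P[of s]
      proof eventually_elim
        case (elim x)
        show ?case
        proof (cases "x \<in> unit_cube s")
          case True
          with elim have P: "0 < Pr s x" "Pr s x < 1" by (auto simp: Pr_def)
          have "real s / 2 * (Pr s x powr (t - 1) / (- ln (Pr s x))) \<le> norm (LF s z a x)"
            using norm_LF_lower[OF s z P, where t=t and a=a] a t by simp
          then show ?thesis using True by (simp add: ennreal_leI)
        qed simp
      qed
    qed
    finally show ?thesis .
  qed
  from fin obtain q where q: "?Q = ennreal q" "q \<ge> 0"
    by (cases ?Q) auto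
  define t where "t = 1 / (2 * q + 2)"
  have t: "0 < t" "t \<le> 1" using q(2) by (auto simp: t_def field_simps)
  have "t ^ s \<le> t ^ 1" using t s by (intro power_decreasing) auto
  then have "1 / (2 * t) \<le> 1 / (2 * t ^ s)" using t by (intro divide_left_mono mult_pos_pos) auto
  moreover have "1 / (2 * t) = q + 1" using q(2) by (simp add: t_def)
  ultimately have "ennreal (q + 1) \<le> ennreal (1 / (2 * t ^ s))" by (intro ennreal_leI) simp
  also have "\<dots> \<le> ennreal q" using lower[OF t(1)] q(1) by simp
  finally have "q + 1 \<le> q" using q(2) by (simp add: ennreal_le_iff)
  then show False by simp
qed

lemma main_lerch:
  fixes z a :: complex
  assumes s: "s \<ge> 1" and nz: "\<forall>k::nat. of_nat k + a \<noteq> 0"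
    and sum: "summable (\<lambda>k. z ^ k / (of_nat k + a) ^ s)"
    and int: "integrable (cube_measure s) (\<lambda>x. indicator (unit_cube s) x *\<^sub>R LF s z a x)"
  shows "lerch_phi z s a = integral\<^sup>L (cube_measure s) (\<lambda>x. indicator (unit_cube s) x *\<^sub>R LF s z a x)"
proof -
  have z: "norm z \<le> 1" by (rule norm_z_le_1[OF sum nz])
  have a: "Re a > 0" by (rule Re_a_pos[OF s z int])
  define G where "G x = indicator (unit_cube s) x *\<^sub>R LF s z a x" for x
  define S where "S N x = G x * (1 - (z * complex_of_real (Pr s x)) ^ N)" for N x
  define Kk where "Kk k x = indicator (unit_cube s) x *\<^sub>R (complex_of_real (Pr s x) powr ((of_nat k + a) - 1) / complex_of_real (- ln (Pr s x)))" for k x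
  have G_meas[measurable]: "G \<in> borel_measurable (cube_measure s)" unfolding G_def by measurable
  have S_meas[measurable]: "S N \<in> borel_measurable (cube_measure s)" for N unfolding S_def by measurable
  have K_meas[measurable]: "Kk k \<in> borel_measurable (cube_measure s)" for k unfolding Kk_def by measurable
  have bk: "Re (of_nat k + a) > 0" for k using a by simp
  have Kint: "integrable (cube_measure s) (Kk k)" for k
    unfolding Kk_def by (rule key_int[OF bk s])
  have Kval: "integral\<^sup>L (cube_measure s) (Kk k) = 1 / (of_nat s * (of_nat k + a) ^ s)" for k
    unfolding Kk_def by (rule key_val[OF bk s])
  have pt: "S N x = (\<Sum>k<N. z ^ k * of_nat s * Kk k x)"
    if x: "x \<in> unit_cube s" and P: "0 < Pr s x" "Pr s x < 1" for N x
  proof -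
    define p where "p = complex_of_real (Pr s x)"
    define L where "L = complex_of_real (- ln (Pr s x))"
    define q where "q = p powr (a - 1)"
    have p0: "p \<noteq> 0" using P by (simp add: p_def)
    have L0: "L \<noteq> 0" using P by (simp add: L_def)
    have zp: "norm (z * p) < 1"
    proof -
      have "norm (z * p) = norm z * Pr s x" using P by (simp add: p_def norm_mult)
      also have "\<dots> \<le> 1 * Pr s x" using z P by (intro mult_right_mono) auto
      finally show ?thesis using P by simp
    qed
    then have zp1: "z * p \<noteq> 1" by auto
    then have zp1': "1 - z * p \<noteq> 0" by simp
    have Kk_eq: "Kk k x = p ^ k * q / L" for k
    proof -
      have "p powr ((of_nat k + a) - 1) = p powr (of_nat k + (a - 1))" by (simp add: algebra_simps)
      also have "\<dots> = p ^ k * q" using p0 by (simp add: powr_add q_def)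
      finally show ?thesis using x by (simp add: Kk_def p_def L_def)
    qed
    have "S N x = (of_nat s * q / ((1 - z * p) * L)) * (1 - (z * p) ^ N)"
      using x by (simp add: S_def G_def LF_def p_def q_def L_def)
    also have "\<dots> = of_nat s * q / L * ((1 - (z * p) ^ N) / (1 - z * p))"
      using L0 zp1' by (simp add: field_simps)
    also have "\<dots> = of_nat s * q / L * (\<Sum>k<N. (z * p) ^ k)"
      using zp1 by (simp add: sum_gp_strict)
    also have "\<dots> = (\<Sum>k<N. z ^ k * of_nat s * (p ^ k * q / L))"
      by (simp add: sum_distrib_left power_mult_distrib algebra_simps)
    also have "\<dots> = (\<Sum>k<N. z ^ k * of_nat s * Kk k x)"
      by (simp add: Kk_eq)
    finally show ?thesis .
  qed
  have Seq: "AE x in cube_measure s. S N x = (\<Sum>k<N. z ^ k * of_nat s * Kk k x)" for N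
    using AE_P[of s]
  proof eventually_elim
    case (elim x)
    show ?case
    proof (cases "x \<in> unit_cube s")
      case True
      with elim have P: "0 < Pr s x" "Pr s x < 1" by (auto simp: Pr_def)
      show ?thesis by (rule pt[OF True P])
    qed (simp add: S_def G_def Kk_def)
  qed
  have Sint: "integral\<^sup>L (cube_measure s) (S N) = (\<Sum>k<N. z ^ k / (of_nat k + a) ^ s)" for N
  proof -
    have "integral\<^sup>L (cube_measure s) (S N) = integral\<^sup>L (cube_measure s) (\<lambda>x. \<Sum>k<N. z ^ k * of_nat s * Kk k x)"
      by (rule integral_cong_AE) (use Seq in auto)
    also have "\<dots> = (\<Sum>k<N. integral\<^sup>L (cube_measure s) (\<lambda>x. z ^ k * of_nat s * Kk k x))"
      by (rule Bochner_Integration.integral_sum) (auto intro: Kint)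
    also have "\<dots> = (\<Sum>k<N. z ^ k / (of_nat k + a) ^ s)"
      using s by (intro sum.cong refl) (simp add: Kval)
    finally show ?thesis .
  qed
  have lim: "(\<lambda>N. integral\<^sup>L (cube_measure s) (S N)) \<longlonglongrightarrow> integral\<^sup>L (cube_measure s) G"
  proof (rule integral_dominated_convergence[where w="\<lambda>x. 2 * norm (G x)"])
    show "integrable (cube_measure s) (\<lambda>x. 2 * norm (G x))"
      using int unfolding G_def by (intro integrable_mult_right integrable_norm)
    show "AE x in cube_measure s. (\<lambda>N. S N x) \<longlonglongrightarrow> G x"
      using AE_P[of s]
    proof eventually_elim
      case (elim x)
      show ?case
      proof (cases "x \<in> unit_cube s")
        case True
        with elim have P: "0 < Pr s x" "Pr s x < 1" by (auto simp: Pr_def)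
        have "norm (z * complex_of_real (Pr s x)) < 1"
        proof -
          have "norm (z * complex_of_real (Pr s x)) = norm z * Pr s x" using P by (simp add: norm_mult)
          also have "\<dots> \<le> 1 * Pr s x" using z P by (intro mult_right_mono) auto
          finally show ?thesis using P by simp
        qed
        then have "(\<lambda>N. (z * complex_of_real (Pr s x)) ^ N) \<longlonglongrightarrow> 0" by (rule LIMSEQ_power_zero)
        then have "(\<lambda>N. G x * (1 - (z * complex_of_real (Pr s x)) ^ N)) \<longlonglongrightarrow> G x * (1 - 0)"
          by (intro tendsto_mult tendsto_diff tendsto_const)
        then show ?thesis by (simp add: S_def)
      qed (simp add: S_def G_def)
    qed
    fix N
    show "AE x in cube_measure s. norm (S N x) \<le> 2 * norm (G x)"
      using AE_P[of s]
    proof eventually_elim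
      case (elim x)
      show ?case
      proof (cases "x \<in> unit_cube s")
        case True
        with elim have P: "0 < Pr s x" "Pr s x < 1" by (auto simp: Pr_def)
        have w: "norm (z * complex_of_real (Pr s x)) \<le> 1"
        proof -
          have "norm (z * complex_of_real (Pr s x)) = norm z * Pr s x" using P by (simp add: norm_mult)
          also have "\<dots> \<le> 1 * 1" using z P by (intro mult_mono) auto
          finally show ?thesis by simp
        qed
        have "norm (1 - (z * complex_of_real (Pr s x)) ^ N) \<le> 1 + norm ((z * complex_of_real (Pr s x)) ^ N)"
          using norm_triangle_ineq4[of 1 "(z * complex_of_real (Pr s x)) ^ N"] by simp
        also have "\<dots> \<le> 1 + 1"
          using w by (simp add: norm_power power_le_one)
        finally have "norm (1 - (z * complex_of_real (Pr s x)) ^ N) \<le> 2" by simp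
        then have "norm (G x) * norm (1 - (z * complex_of_real (Pr s x)) ^ N) \<le> norm (G x) * 2"
          by (intro mult_left_mono) auto
        then show ?thesis by (simp add: S_def norm_mult mult.commute)
      qed (simp add: S_def G_def)
    qed
  qed simp_all
  then have "(\<lambda>N. \<Sum>k<N. z ^ k / (of_nat k + a) ^ s) \<longlonglongrightarrow> integral\<^sup>L (cube_measure s) G"
    by (simp add: Sint)
  moreover have "(\<lambda>N. \<Sum>k<N. z ^ k / (of_nat k + a) ^ s) \<longlonglongrightarrow> lerch_phi z s a"
    unfolding lerch_phi_def by (rule summable_LIMSEQ[OF sum])
  ultimately show ?thesis unfolding G_def by (rule LIMSEQ_unique[rotated])
qed


theorem theorem3p1:
  fixes s :: nat and z a :: complex
  assumes "s > 1"
    and "\<forall>k::nat. of_nat k + a \<noteq> 0"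
    and "summable (\<lambda>k. z ^ k / (of_nat k + a) ^ s)"
    and "set_integrable (cube_measure s) (unit_cube s)
           (\<lambda>x. (- of_nat s * (complex_of_real (\<Prod>n\<in>{1..s+1}. x n)) powr (a - 1))
                / ((1 - z * complex_of_real (\<Prod>n\<in>{1..s+1}. x n))
                   * complex_of_real (ln (\<Prod>n\<in>{1..s+1}. x n))))"
  shows "lerch_phi z s a =
           (LINT x:unit_cube s|cube_measure s.
              (- of_nat s * (complex_of_real (\<Prod>n\<in>{1..s+1}. x n)) powr (a - 1))
                / ((1 - z * complex_of_real (\<Prod>n\<in>{1..s+1}. x n))
                   * complex_of_real (ln (\<Prod>n\<in>{1..s+1}. x n))))
         \<and> (set_integrable (cube_measure s) (unit_cube s)
           (\<lambda>x. (- of_nat s)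
                / ((1 - complex_of_real (\<Prod>k\<in>{1..s+1}. x k))
                   * complex_of_real (ln (\<Prod>k\<in>{1..s+1}. x k))))
         \<longrightarrow> zeta_int s =
           (LINT x:unit_cube s|cube_measure s.
              (- of_nat s)
                / ((1 - complex_of_real (\<Prod>k\<in>{1..s+1}. x k))
                   * complex_of_real (ln (\<Prod>k\<in>{1..s+1}. x k)))))"
  proof -
  have s1: "s \<ge> 1" using assms(1) by simp
  have eqF: "(\<lambda>x. (- of_nat s * (complex_of_real (\<Prod>n\<in>{1..s+1}. x n)) powr (a - 1))
                / ((1 - z * complex_of_real (\<Prod>n\<in>{1..s+1}. x n))
                   * complex_of_real (ln (\<Prod>n\<in>{1..s+1}. x n)))) = LF s z a"
    by (rule ext) (simp only: LF_def Pr_def)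
  have int: "integrable (cube_measure s) (\<lambda>x. indicator (unit_cube s) x *\<^sub>R LF s z a x)"
    using assms(4) unfolding eqF set_integrable_def .
  have part1: "lerch_phi z s a =
           (LINT x:unit_cube s|cube_measure s.
              (- of_nat s * (complex_of_real (\<Prod>n\<in>{1..s+1}. x n)) powr (a - 1))
                / ((1 - z * complex_of_real (\<Prod>n\<in>{1..s+1}. x n))
                   * complex_of_real (ln (\<Prod>n\<in>{1..s+1}. x n))))"
    unfolding eqF set_lebesgue_integral_def by (rule main_lerch[OF s1 assms(2,3) int])
  have part2: "zeta_int s =
           (LINT x:unit_cube s|cube_measure s.
              (- of_nat s)
                / ((1 - complex_of_real (\<Prod>k\<in>{1..s+1}. x k))
                   * complex_of_real (ln (\<Prod>k\<in>{1..s+1}. x k))))"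
    if Zint: "set_integrable (cube_measure s) (unit_cube s)
           (\<lambda>x. (- of_nat s)
                / ((1 - complex_of_real (\<Prod>k\<in>{1..s+1}. x k))
                   * complex_of_real (ln (\<Prod>k\<in>{1..s+1}. x k))))"
  proof -
    define Z where "Z x = indicator (unit_cube s) x *\<^sub>R ((- of_nat s)
                / ((1 - complex_of_real (\<Prod>k\<in>{1..s+1}. x k))
                   * complex_of_real (ln (\<Prod>k\<in>{1..s+1}. x k))))" for x
    have Z_meas[measurable]: "Z \<in> borel_measurable (cube_measure s)"
      unfolding Z_def Pr_def[symmetric] by measurable
    have aeZ: "AE x in cube_measure s. Z x = indicator (unit_cube s) x *\<^sub>R LF s 1 1 x"
      using AE_P[of s]
    proof eventually_elim
      case (elim x)
      show ?case
      proof (cases "x \<in> unit_cube s")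
        case True
        with elim have P: "0 < Pr s x" by (auto simp: Pr_def)
        then have pw: "complex_of_real (Pr s x) powr 0 = 1" by (simp add: powr_def)
        show ?thesis using True unfolding Z_def LF_def Pr_def[symmetric] by (simp add: pw)
      qed (simp add: Z_def)
    qed
    have intZ: "integrable (cube_measure s) Z" using Zint unfolding set_integrable_def Z_def .
    have int1: "integrable (cube_measure s) (\<lambda>x. indicator (unit_cube s) x *\<^sub>R LF s 1 1 x)"
      using intZ by (rule integrable_cong_AE_imp) (use aeZ in auto)
    have nz1: "\<forall>k::nat. of_nat k + (1::complex) \<noteq> 0"
    proof
      fix k :: nat
      have "of_nat k + (1::complex) = of_nat (Suc k)" by simp
      then show "of_nat k + (1::complex) \<noteq> 0" by (simp only: of_nat_eq_0_iff)
    qed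
    have "summable (\<lambda>n. inverse (of_nat n ^ s :: complex))"
      using assms(1) by (intro inverse_power_summable) simp
    then have "summable (\<lambda>n. inverse (of_nat (Suc n) ^ s :: complex))"
      by (subst summable_Suc_iff)
    then have sum1: "summable (\<lambda>k. (1::complex) ^ k / (of_nat k + 1) ^ s)"
      by (simp add: divide_inverse add.commute)
    have "zeta_int s = lerch_phi 1 s 1"
      unfolding zeta_int_def lerch_phi_def by (simp add: add.commute)
    also have "\<dots> = integral\<^sup>L (cube_measure s) (\<lambda>x. indicator (unit_cube s) x *\<^sub>R LF s 1 1 x)"
      by (rule main_lerch[OF s1 nz1 sum1 int1])
    also have "\<dots> = integral\<^sup>L (cube_measure s) Z"
      by (rule integral_cong_AE) (use aeZ in auto)
    finally show ?thesis unfolding set_lebesgue_integral_def Z_def .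
  qed
  show ?thesis using part1 part2 by blast
qed

end
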